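(* Let $(G,+)$ be an abelian group with identity $0$. Let $M=(E,\mathcal{I})$ and $N=(E',\mathcal{I}')$ be two transversal matroids over $G$ with partitions $\{E_i\}_{i\in[n]}$ of $E$ and $\{E'_i\}_{i\in[n]}$ of $E'$, respectively, such that $|E_i|=|E'_i|$ for all $i$. Assume there exists a total order $\preceq$ on $E\cup E'\cup(E+E')\cup\{0\}$ compatible with the group structure of $G$ such that: (1) $E$ and $E'$ are both positive; (2) for all $1\le i<j\le n$: $E_i\prec E_j$, $E'_i\prec E'_j$, and $|E_i|>|E_j|$; (3) $\max E\preceq \max E'$. Then $M$ is matched to $N$.
   Context: Given a partition of a finite set $E$ into disjoint sets $E_1,\dots,E_l$, the transversal matroid on $E$ has as independent sets those $X\subseteq E$ with $|X\cap E_i|\le 1$ for all $i$. A matroid over $G$ is a matroid whose finite ground set is a subset of $G$. $E+E'=\{a+b: a\in E, b\in E'\}$. A total order $\preceq$ on $A\subseteq G$ is compatible with the group structure if for all $a,b,c\in A$, $a\preceq b$ implies $a+c\preceq b+c$. An element $x$ is positive if $0\prec x$; a set is positive if all its elements are positive. For sets $A,B$, $A\prec B$ means $a\prec b$ for all $a\in A$, $b\in B$ (where $\prec$ means $\preceq$ and $\ne$). For matroids $M,N$ over $G$ with $r(M)=r(N)=n>0$ and bases $\mathcal{M}=\{a_1,\dots,a_n\}$ of $M$ and $\mathcal{N}=\{b_1,\dots,b_n\}$ of $N$, $\mathcal{M}$ is matched to $\mathcal{N}$ if there is a permutation $\pi\in S_n$ with $a_i+b_{\pi(i)}\notin E(M)$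 for all $i$. $M$ is matched to $N$ if for every basis $\mathcal{M}$ of $M$ there exists a basis $\mathcal{N}$ of $N$ such that $\mathcal{M}$ is matched to $\mathcal{N}$. *)

theory Defs
  imports Main
begin

definition is_partition :: "'a set \<Rightarrow> nat \<Rightarrow> (nat \<Rightarrow> 'a set) \<Rightarrow> bool" where
  "is_partition E n P \<longleftrightarrow> finite E \<and> E = (\<Union>i\<in>{1..n}. P i) \<and>
     (\<forall>i\<in>{1..n}. P i \<noteq> {}) \<and>
     (\<forall>i\<in>{1..n}. \<forall>j\<in>{1..n}. i \<noteq> j \<longrightarrow> P i \<inter> P j = {})"

definition trans_indep :: "'a set \<Rightarrow> nat \<Rightarrow> (nat \<Rightarrow> 'a set) \<Rightarrow> 'a set \<Rightarrow> bool" where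
  "trans_indep E n P X \<longleftrightarrow> X \<subseteq> E \<and> (\<forall>i\<in>{1..n}. card (X \<inter> P i) \<le> 1)"

definition trans_basis :: "'a set \<Rightarrow> nat \<Rightarrow> (nat \<Rightarrow> 'a set) \<Rightarrow> 'a set \<Rightarrow> bool" where
  "trans_basis E n P B \<longleftrightarrow> trans_indep E n P B \<and>
     (\<forall>X. trans_indep E n P X \<and> B \<subseteq> X \<longrightarrow> X = B)"

definition basis_matched :: "'a::plus set \<Rightarrow> 'a set \<Rightarrow> 'a set \<Rightarrow> bool" where
  "basis_matched E B B' \<longleftrightarrow> (\<exists>f. bij_betw f B B' \<and> (\<forall>a\<in>B. a + f a \<notin> E))"

definition trans_matched ::
  "'a::plus set \<Rightarrow> nat \<Rightarrow> (nat \<Rightarrow> 'a set) \<Rightarrow> 'a set \<Rightarrow> nat \<Rightarrow> (nat \<Rightarrow> 'a set) \<Rightarrow> bool" where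
  "trans_matched E n P E' m P' \<longleftrightarrow>
     (\<forall>B. trans_basis E n P B \<longrightarrow> (\<exists>B'. trans_basis E' m P' B' \<and> basis_matched E B B'))"

definition sumset :: "'a::plus set \<Rightarrow> 'a set \<Rightarrow> 'a set" where
  "sumset A B = {a + b | a b. a \<in> A \<and> b \<in> B}"

definition order_compatible :: "'a::plus set \<Rightarrow> ('a \<times> 'a) set \<Rightarrow> bool" where
  "order_compatible A r \<longleftrightarrow> (\<forall>a\<in>A. \<forall>b\<in>A. \<forall>c\<in>A.
     (a, b) \<in> r \<and> a + c \<in> A \<and> b + c \<in> A \<longrightarrow> (a + c, b + c) \<in> r)"

definition strict_lt :: "('a \<times> 'a) set \<Rightarrow> 'a \<Rightarrow> 'a \<Rightarrow> bool" where
  "strict_lt r a b \<longleftrightarrow> (a, b) \<in> r \<and> a \<noteq> b"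

definition set_positive :: "('a \<times> 'a) set \<Rightarrow> 'a::zero set \<Rightarrow> bool" where
  "set_positive r A \<longleftrightarrow> (\<forall>x\<in>A. strict_lt r 0 x)"

definition set_less :: "('a \<times> 'a) set \<Rightarrow> 'a set \<Rightarrow> 'a set \<Rightarrow> bool" where
  "set_less r A B \<longleftrightarrow> (\<forall>a\<in>A. \<forall>b\<in>B. strict_lt r a b)"

definition ord_max :: "('a \<times> 'a) set \<Rightarrow> 'a set \<Rightarrow> 'a" where
  "ord_max r A = (THE m. m \<in> A \<and> (\<forall>x\<in>A. (x, m) \<in> r))"

end

theory Submission
  imports Defs
begin

lemma sum_shift_lemma:
  fixes c :: "nat \<Rightarrow> nat"
  assumes mono: "\<forall>i\<in>{1..n}. \<forall>j\<in>{1..n}. i < j \<longrightarrow> c j \<le> c i"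
    and K: "K \<subseteq> {1..n}" "card K = n + 1 - k" "1 \<le> k" "k \<le> n"
  shows "sum c {k..n} \<le> sum c K"
proof -
  define L where "L = K \<inter> {..<k}"
  define R where "R = {k..n} - K"
  define M where "M = K \<inter> {k..n}"
  have fK: "finite K" using K(1) finite_subset by blast
  have K1: "K = M \<union> L" "M \<inter> L = {}" using K(1) unfolding M_def L_def by auto
  have K2: "{k..n} = M \<union> R" "M \<inter> R = {}" unfolding M_def R_def by auto
  have fM: "finite M" "finite L" "finite R" using fK unfolding M_def L_def R_def by auto
  have "card K = card M + card L" using K1 fM card_Un_disjoint by metis
  moreover have "card {k..n} = card M + card R" using K2 fM card_Un_disjoint by metis
  ultimately have cLR: "card L = card R" using K by simp
  have "card L * c k \<le> sum c L"
    using sum_bounded_below[of L "c k" c] mono K unfolding L_def by force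
  moreover have "sum c R \<le> card R * c k"
  proof -
    have "\<And>j. j \<in> R \<Longrightarrow> c j \<le> c k"
    proof -
      fix j assume "j \<in> R"
      then have "k \<le> j" "j \<le> n" unfolding R_def by auto
      then show "c j \<le> c k" using mono K by (cases "k = j") auto
    qed
    then show ?thesis using sum_bounded_above[of R c "c k"] by simp
  qed
  moreover have "sum c K = sum c M + sum c L" using K1 fM sum.union_disjoint by metis
  moreover have "sum c {k..n} = sum c M + sum c R" using K2 fM sum.union_disjoint by metis
  ultimately show ?thesis using cLR by simp
qed


lemma good_block:
  fixes E E' :: "'a::ab_group_add set"
    and P P' :: "nat \<Rightarrow> 'a set"
  assumes partE: "is_partition E n P"
    and partE': "is_partition E' n P'"
    and card_eq: "\<forall>i\<in>{1..n}. card (P i) = card (P' i)"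
    and lin: "linear_order_on (E \<union> E' \<union> sumset E E' \<union> {0}) r"
    and compat: "order_compatible (E \<union> E' \<union> sumset E E' \<union> {0}) r"
    and pos': "set_positive r E'"
    and ordered: "\<forall>i\<in>{1..n}. \<forall>j\<in>{1..n}. i < j \<longrightarrow>
        set_less r (P i) (P j) \<and> set_less r (P' i) (P' j) \<and> card (P i) > card (P j)"
    and k: "1 \<le> k" "k \<le> n" and ak: "a \<in> P k"
    and K: "K \<subseteq> {1..n}" "card K = n + 1 - k"
  shows "\<exists>j\<in>K. \<exists>b\<in>P' j. a + b \<notin> E"
proof (rule ccontr)
  assume "\<not> ?thesis"
  then have H: "\<And>j b. j \<in> K \<Longrightarrow> b \<in> P' j \<Longrightarrow> a + b \<in> E" by blast
  define A where "A = E \<union> E' \<union> sumset E E' \<union> {0}"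
  have antis: "antisym r" using lin unfolding A_def linear_order_on_def partial_order_on_def by blast
  have fE: "finite E" and EU: "E = (\<Union>i\<in>{1..n}. P i)" and Pne: "\<forall>i\<in>{1..n}. P i \<noteq> {}"
    and Pdis: "\<forall>i\<in>{1..n}. \<forall>j\<in>{1..n}. i \<noteq> j \<longrightarrow> P i \<inter> P j = {}"
    using partE unfolding is_partition_def by auto
  have fE': "finite E'" and EU': "E' = (\<Union>i\<in>{1..n}. P' i)"
    and Pdis': "\<forall>i\<in>{1..n}. \<forall>j\<in>{1..n}. i \<noteq> j \<longrightarrow> P' i \<inter> P' j = {}"
    using partE' unfolding is_partition_def by auto
  have fP: "\<And>i. i \<in> {1..n} \<Longrightarrow> finite (P i)" using fE EU
    by (metis UN_I finite_subset subsetI)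
  have fP': "\<And>i. i \<in> {1..n} \<Longrightarrow> finite (P' i)" using fE' EU'
    by (metis UN_I finite_subset subsetI)
  have aE: "a \<in> E" using ak k EU by auto
  define W where "W = (\<Union>j\<in>K. P' j)"
  define U where "U = {e \<in> E. (a, e) \<in> r \<and> e \<noteq> a}"
  have fK: "finite K" using K finite_subset by blast
  have inj: "inj_on ((+) a) W" by (simp add: inj_on_def)
  have img: "(+) a ` W \<subseteq> U"
  proof
    fix x assume "x \<in> (+) a ` W"
    then obtain j b where j: "j \<in> K" and b: "b \<in> P' j" and x: "x = a + b" unfolding W_def by blast
    have xE: "x \<in> E" using H j b x by simp
    have bE': "b \<in> E'" using j b K EU' by auto
    then have "strict_lt r 0 b" using pos' unfolding set_positive_def by blast
    then have r0b: "(0, b) \<in> r" and bnz: "b \<noteq> 0" unfolding strict_lt_def by auto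
    have c1: "\<forall>a\<in>A. \<forall>b\<in>A. \<forall>c\<in>A. (a, b) \<in> r \<and> a + c \<in> A \<and> b + c \<in> A \<longrightarrow> (a + c, b + c) \<in> r"
      using compat unfolding order_compatible_def A_def by blast
    have "0 \<in> A" "b \<in> A" "a \<in> A" "0 + a \<in> A" "b + a \<in> A"
      using aE bE' xE x unfolding A_def by (auto simp: add.commute)
    then have "(0 + a, b + a) \<in> r" using c1 r0b by blast
    then have "(a, x) \<in> r" using x by (simp add: add.commute)
    moreover have "x \<noteq> a" using x bnz by simp
    ultimately show "x \<in> U" using xE unfolding U_def by simp
  qed
  have fU: "finite U" using fE unfolding U_def by simp
  have "card W \<le> card U" using card_inj_on_le[OF inj img fU] .
  moreover have "card W = (\<Sum>j\<in>K. card (P j))"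
  proof -
    have "card W = (\<Sum>j\<in>K. card (P' j))" unfolding W_def
      using card_UN_disjoint[of K P'] fK fP' Pdis' K by (metis subsetD)
    also have "\<dots> = (\<Sum>j\<in>K. card (P j))" using card_eq K by (intro sum.cong) auto
    finally show ?thesis .
  qed
  moreover have "card U < (\<Sum>j\<in>{k..n}. card (P j))"
  proof -
    define V where "V = (\<Union>j\<in>{k..n}. P j)"
    have cV: "card V = (\<Sum>j\<in>{k..n}. card (P j))" unfolding V_def
      using card_UN_disjoint[of "{k..n}" P] fP Pdis k by auto
    have fV: "finite V" unfolding V_def using fP k by auto
    have aV: "a \<in> V" unfolding V_def using ak k by auto
    have "U \<subseteq> V - {a}"
    proof
      fix e assume e: "e \<in> U"
      then have eE: "e \<in> E" and ae: "(a, e) \<in> r" and ena: "e \<noteq> a" unfolding U_def by auto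
      then obtain j where j: "j \<in> {1..n}" "e \<in> P j" using EU by auto
      have "\<not> j < k"
      proof
        assume "j < k"
        then have "set_less r (P j) (P k)" using ordered j k by auto
        then have "(e, a) \<in> r" using j ak unfolding set_less_def strict_lt_def by blast
        then show False using antis ae ena unfolding antisym_def by blast
      qed
      then show "e \<in> V - {a}" using j ena unfolding V_def by auto
    qed
    then have "card U \<le> card (V - {a})" using fV by (simp add: card_mono)
    also have "\<dots> < card V" using fV aV by (metis card_Diff1_less)
    finally show ?thesis using cV by simp
  qed
  moreover have "(\<Sum>j\<in>{k..n}. card (P j)) \<le> (\<Sum>j\<in>K. card (P j))"
    using sum_shift_lemma[of n "\<lambda>j. card (P j)" K k] ordered K k
    by (metis less_imp_le)
  ultimately show False by linarith
qed


lemma assign: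
  fixes a :: "nat \<Rightarrow> 'a::plus" and E :: "'a set" and P' :: "nat \<Rightarrow> 'a set"
  assumes step: "\<And>k K. 1 \<le> k \<Longrightarrow> k \<le> n \<Longrightarrow> K \<subseteq> {1..n} \<Longrightarrow> card K = n + 1 - k
      \<Longrightarrow> \<exists>j\<in>K. \<exists>b\<in>P' j. a k + b \<notin> E"
  shows "m \<le> n \<Longrightarrow> K \<subseteq> {1..n} \<Longrightarrow> card K = m \<Longrightarrow>
    \<exists>g \<tau>. inj_on \<tau> {n+1-m..n} \<and> (\<forall>i\<in>{n+1-m..n}. \<tau> i \<in> K \<and> g i \<in> P' (\<tau> i) \<and> a i + g i \<notin> E)"
proof (induction m arbitrary: K)
  case 0
  then show ?case by auto
next
  case (Suc m)
  define k where "k = n - m"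
  have k: "1 \<le> k" "k \<le> n" "card K = n + 1 - k" using Suc.prems unfolding k_def by auto
  obtain j b where j: "j \<in> K" and b: "b \<in> P' j" and ab: "a k + b \<notin> E"
    using step[OF k(1,2) Suc.prems(2) k(3)] by blast
  have fK: "finite K" using Suc.prems(2) finite_subset by blast
  have "card (K - {j}) = m" using Suc.prems(3) j fK by simp
  moreover have "K - {j} \<subseteq> {1..n}" using Suc.prems(2) by auto
  ultimately obtain g \<tau> where inj: "inj_on \<tau> {n+1-m..n}"
    and gt: "\<forall>i\<in>{n+1-m..n}. \<tau> i \<in> K - {j} \<and> g i \<in> P' (\<tau> i) \<and> a i + g i \<notin> E"
    using Suc.IH Suc.prems(1) by (metis Suc_leD)
  have iv: "{n+1-Suc m..n} = insert k {n+1-m..n}" "k \<notin> {n+1-m..n}"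
    using Suc.prems(1) unfolding k_def by auto
  define g' where "g' = g(k := b)"
  define \<tau>' where "\<tau>' = \<tau>(k := j)"
  have "inj_on \<tau>' {n+1-Suc m..n}"
    unfolding iv(1) using inj iv(2) gt unfolding \<tau>'_def inj_on_def by auto
  moreover have "\<forall>i\<in>{n+1-Suc m..n}. \<tau>' i \<in> K \<and> g' i \<in> P' (\<tau>' i) \<and> a i + g' i \<notin> E"
    unfolding iv(1) using gt iv(2) j b ab unfolding \<tau>'_def g'_def by auto
  ultimately show ?case by blast
qed

theorem theorem2p15:
  fixes E E' :: "'a::ab_group_add set"
    and P P' :: "nat \<Rightarrow> 'a set"
    and n :: nat
    and r :: "('a \<times> 'a) set"
  assumes n_pos: "n > 0"
    and partE: "is_partition E n P"
    and partE': "is_partition E' n P'"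
    and card_eq: "\<forall>i\<in>{1..n}. card (P i) = card (P' i)"
    and lin: "linear_order_on (E \<union> E' \<union> sumset E E' \<union> {0}) r"
    and compat: "order_compatible (E \<union> E' \<union> sumset E E' \<union> {0}) r"
    and pos: "set_positive r E" "set_positive r E'"
    and ordered: "\<forall>i\<in>{1..n}. \<forall>j\<in>{1..n}. i < j \<longrightarrow>
        set_less r (P i) (P j) \<and> set_less r (P' i) (P' j) \<and> card (P i) > card (P j)"
    and maxs: "(ord_max r E, ord_max r E') \<in> r"
  shows "trans_matched E n P E' n P'"
  proof -
  have fE: "finite E" and EU: "E = (\<Union>i\<in>{1..n}. P i)" and Pne: "\<forall>i\<in>{1..n}. P i \<noteq> {}"
    and Pdis: "\<forall>i\<in>{1..n}. \<forall>j\<in>{1..n}. i \<noteq> j \<longrightarrow> P i \<inter> P j = {}"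
    using partE unfolding is_partition_def by auto
  have fE': "finite E'" and EU': "E' = (\<Union>i\<in>{1..n}. P' i)"
    and Pdis': "\<forall>i\<in>{1..n}. \<forall>j\<in>{1..n}. i \<noteq> j \<longrightarrow> P' i \<inter> P' j = {}"
    using partE' unfolding is_partition_def by auto
  show ?thesis unfolding trans_matched_def
  proof (intro allI impI)
    fix B assume Bb: "trans_basis E n P B"
    have BE: "B \<subseteq> E" and Bc: "\<forall>i\<in>{1..n}. card (B \<inter> P i) \<le> 1"
      and Bmax: "\<And>X. trans_indep E n P X \<Longrightarrow> B \<subseteq> X \<Longrightarrow> X = B"
      using Bb unfolding trans_basis_def trans_indep_def by auto
    have fB: "finite B" using BE fE finite_subset by blast
    have single: "\<exists>x. B \<inter> P i = {x}" if i: "i \<in> {1..n}" for i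
    proof -
      have ne: "B \<inter> P i \<noteq> {}"
      proof
        assume emp: "B \<inter> P i = {}"
        obtain p where p: "p \<in> P i" using Pne i by blast
        have "trans_indep E n P (insert p B)"
          unfolding trans_indep_def
        proof (intro conjI ballI)
          show "insert p B \<subseteq> E" using BE p i EU by auto
        next
          fix j assume j: "j \<in> {1..n}"
          show "card (insert p B \<inter> P j) \<le> 1"
          proof (cases "j = i")
            case True
            then have "insert p B \<inter> P j = {p}" using emp p by auto
            then show ?thesis by simp
          next
            case False
            then have "p \<notin> P j" using Pdis i j p by blast
            then have "insert p B \<inter> P j = B \<inter> P j" by auto
            then show ?thesis using Bc j by simp
          qed
        qed
        then have "insert p B = B" using Bmax by blast
        then show False using emp p by auto
      qed
      have "card (B \<inter> P i) = 1" using ne Bc i fB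
        by (metis One_nat_def card_0_eq finite_Int le_SucE le_zero_eq)
      then show ?thesis by (meson card_1_singletonE)
    qed
    define a where "a i = (SOME x. B \<inter> P i = {x})" for i
    have a: "B \<inter> P i = {a i}" if "i \<in> {1..n}" for i
      unfolding a_def using single[OF that] by (metis (mono_tags, lifting) someI_ex)
    have aP: "a i \<in> P i" "a i \<in> B" if "i \<in> {1..n}" for i using a[OF that] by auto
    have step: "\<exists>j\<in>K. \<exists>b\<in>P' j. a k + b \<notin> E"
      if "1 \<le> k" "k \<le> n" "K \<subseteq> {1..n}" "card K = n + 1 - k" for k K
      using good_block[OF partE partE' card_eq lin compat pos(2) ordered that(1,2) aP(1) that(3,4)]
        that by auto
    obtain g \<tau> where inj: "inj_on \<tau> {1..n}"
      and gt: "\<forall>i\<in>{1..n}. \<tau> i \<in> {1..n} \<and> g i \<in> P' (\<tau> i) \<and> a i + g i \<notin> E"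
      using assign[where a=a and P'=P' and E=E and n=n, OF step, of n "{1..n}"] by auto
    have "\<tau> ` {1..n} \<subseteq> {1..n}" using gt by auto
    then have tsurj: "\<tau> ` {1..n} = {1..n}" using endo_inj_surj[of "{1..n}" \<tau>] inj by auto
    have ginj: "inj_on g {1..n}"
    proof (rule inj_onI)
      fix i i' assume i: "i \<in> {1..n}" "i' \<in> {1..n}" "g i = g i'"
      have "g i \<in> P' (\<tau> i)" "g i' \<in> P' (\<tau> i')" using gt i(1,2) by blast+
      then have "P' (\<tau> i) \<inter> P' (\<tau> i') \<noteq> {}" using i by auto
      then have "\<tau> i = \<tau> i'" using Pdis' gt i by blast
      then show "i = i'" using inj i unfolding inj_on_def by blast
    qed
    have ainj: "inj_on a {1..n}"
    proof (rule inj_onI)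
      fix i i' assume i: "i \<in> {1..n}" "i' \<in> {1..n}" "a i = a i'"
      then have "P i \<inter> P i' \<noteq> {}" using aP by (metis disjoint_iff)
      then show "i = i'" using Pdis i by blast
    qed
    have Ba: "B = a ` {1..n}"
    proof
      show "B \<subseteq> a ` {1..n}"
      proof
        fix x assume x: "x \<in> B"
        then obtain i where i: "i \<in> {1..n}" "x \<in> P i" using BE EU by auto
        then have "x = a i" using a[OF i(1)] x by auto
        then show "x \<in> a ` {1..n}" using i by auto
      qed
    next
      show "a ` {1..n} \<subseteq> B" using aP by auto
    qed
    define B' where "B' = g ` {1..n}"
    have B'E: "B' \<subseteq> E'" unfolding B'_def using gt EU' by fastforce
    have fB': "finite B'" unfolding B'_def by simp
    have B'uniq: "x = g i" if xB: "x \<in> B'" "x \<in> P' (\<tau> i)" "i \<in> {1..n}" for x i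
    proof -
      obtain i' where i': "i' \<in> {1..n}" "x = g i'" using xB(1) unfolding B'_def by auto
      have "g i' \<in> P' (\<tau> i')" using gt i' by auto
      then have "P' (\<tau> i') \<inter> P' (\<tau> i) \<noteq> {}" using i' that by auto
      then have "\<tau> i' = \<tau> i" using Pdis' gt i' that by blast
      then have "i' = i" using inj i' that unfolding inj_on_def by blast
      then show ?thesis using i' by simp
    qed
    have B'b: "trans_basis E' n P' B'"
      unfolding trans_basis_def trans_indep_def
    proof (intro conjI allI impI ballI)
      show "B' \<subseteq> E'" by (rule B'E)
    next
      fix j assume j: "j \<in> {1..n}"
      then obtain i where i: "i \<in> {1..n}" "\<tau> i = j" using tsurj by (metis imageE)
      show "card (B' \<inter> P' j) \<le> 1"
        using card_le_Suc0_iff_eq[of "B' \<inter> P' j"] fB' B'uniq i by auto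
    next
      fix X assume X: "(X \<subseteq> E' \<and> (\<forall>i\<in>{1..n}. card (X \<inter> P' i) \<le> 1)) \<and> B' \<subseteq> X"
      show "X = B'"
      proof
        show "X \<subseteq> B'"
        proof
          fix x assume x: "x \<in> X"
          then obtain j where j: "j \<in> {1..n}" "x \<in> P' j" using X EU' by auto
          then obtain i where i: "i \<in> {1..n}" "\<tau> i = j" using tsurj by (metis imageE)
          have gi: "g i \<in> X \<inter> P' j" "g i \<in> B'" using gt i X unfolding B'_def by auto
          have "finite (X \<inter> P' j)" using X fE' finite_subset by blast
          then have "x = g i" using card_le_Suc0_iff_eq[of "X \<inter> P' j"] X j gi x by auto
          then show "x \<in> B'" using gi by simp
        qed
      qed (use X in auto)
    qed
    define f where "f = g \<circ> inv_into {1..n} a"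
    have "bij_betw f B B'"
    proof -
      have "bij_betw (inv_into {1..n} a) B {1..n}"
        using Ba ainj by (simp add: bij_betw_inv_into inj_on_imp_bij_betw)
      moreover have "bij_betw g {1..n} B'" unfolding B'_def using ginj by (simp add: inj_on_imp_bij_betw)
      ultimately show ?thesis unfolding f_def by (rule bij_betw_trans)
    qed
    moreover have "\<forall>x\<in>B. x + f x \<notin> E"
    proof
      fix x assume "x \<in> B"
      then obtain i where i: "i \<in> {1..n}" "x = a i" using Ba by auto
      then have "inv_into {1..n} a x = i" using ainj by (simp add: inv_into_f_f)
      then show "x + f x \<notin> E" using gt i unfolding f_def by simp
    qed
    ultimately have "basis_matched E B B'" unfolding basis_matched_def by blast
    then show "\<exists>B'. trans_basis E' n P' B' \<and> basis_matched E B B'" using B'b by blast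
  qed
qed

end
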